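(* Let $p\ge 7$ be a prime. Then $$\sum_{1\le i<j<k\le p-1}\frac{1}{i^2jk}\equiv \sum_{1\le i<j<k\le p-1}\frac{1}{ijk^2}\equiv -\frac{1}{2}\sum_{1\le i<j<k\le p-1}\frac{1}{ij^2k}\pmod{p}.$$
   Context: Sums are over integers $i,j,k$. Congruences modulo $p$ are taken in the ring of rationals with denominators not divisible by $p$. *)

theory Defs
  imports Complex_Main "HOL-Computational_Algebra.Primes"
begin

text \<open>Congruence modulo p in the ring Z_(p) of rationals whose denominators are
  not divisible by p: x and y are congruent if their difference is of the form
  a/b with integers a, b, where p divides a and p does not divide b.\<close>
definition rat_cong :: "rat \<Rightarrow> rat \<Rightarrow> int \<Rightarrow> bool" where
  "rat_cong x y p \<longleftrightarrow> (\<exists>a b. b \<noteq> 0 \<and> \<not> p dvd b \<and> p dvd a \<and> x - y = of_int a / of_int b)"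

end

theory Submission
  imports Defs "HOL-Number_Theory.Cong"
begin


definition pzero :: "int \<Rightarrow> rat \<Rightarrow> bool" where
  "pzero p x \<longleftrightarrow> (\<exists>a b. b \<noteq> 0 \<and> \<not> p dvd b \<and> p dvd a \<and> x = of_int a / of_int b)"
definition pint :: "int \<Rightarrow> rat \<Rightarrow> bool" where
  "pint p x \<longleftrightarrow> (\<exists>a b. b \<noteq> 0 \<and> \<not> p dvd b \<and> x = of_int a / of_int b)"

lemma rat_cong_pzero: "rat_cong x y p \<longleftrightarrow> pzero p (x - y)"
  unfolding rat_cong_def pzero_def by blast

lemma pzero_0: "prime p \<Longrightarrow> pzero p 0"
  unfolding pzero_def by (rule exI[of _ 0], rule exI[of _ 1]) (auto dest: not_prime_unit)

lemma pzero_add: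
  assumes "prime p" "pzero p x" "pzero p y" shows "pzero p (x + y)"
proof -
  obtain a b where ab: "b \<noteq> 0" "\<not> p dvd b" "p dvd a" "x = of_int a / of_int b"
    using assms(2) unfolding pzero_def by blast
  obtain c d where cd: "d \<noteq> 0" "\<not> p dvd d" "p dvd c" "y = of_int c / of_int d"
    using assms(3) unfolding pzero_def by blast
  have "x + y = of_int (a*d + c*b) / of_int (b*d)" using ab cd by (simp add: field_simps)
  moreover have "\<not> p dvd b*d" using ab cd assms(1) prime_dvd_mult_iff by blast
  moreover have "p dvd a*d + c*b" using ab cd by simp
  ultimately show ?thesis unfolding pzero_def using ab cd
    by (intro exI[of _ "a*d + c*b"] exI[of _ "b*d"]) auto
qed

lemma pint_add:
  assumes "prime p" "pint p x" "pint p y" shows "pint p (x + y)"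
proof -
  obtain a b where ab: "b \<noteq> 0" "\<not> p dvd b" "x = of_int a / of_int b"
    using assms(2) unfolding pint_def by blast
  obtain c d where cd: "d \<noteq> 0" "\<not> p dvd d" "y = of_int c / of_int d"
    using assms(3) unfolding pint_def by blast
  have "x + y = of_int (a*d + c*b) / of_int (b*d)" using ab cd by (simp add: field_simps)
  moreover have "\<not> p dvd b*d" using ab cd assms(1) prime_dvd_mult_iff by blast
  ultimately show ?thesis unfolding pint_def using ab cd
    by (intro exI[of _ "a*d + c*b"] exI[of _ "b*d"]) auto
qed

lemma pint_mult:
  assumes "prime p" "pint p x" "pint p y" shows "pint p (x * y)"
proof -
  obtain a b where ab: "b \<noteq> 0" "\<not> p dvd b" "x = of_int a / of_int b"
    using assms(2) unfolding pint_def by blast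
  obtain c d where cd: "d \<noteq> 0" "\<not> p dvd d" "y = of_int c / of_int d"
    using assms(3) unfolding pint_def by blast
  have "x * y = of_int (a*c) / of_int (b*d)" using ab cd by (simp add: field_simps)
  moreover have "\<not> p dvd b*d" using ab cd assms(1) prime_dvd_mult_iff by blast
  ultimately show ?thesis unfolding pint_def using ab cd
    by (intro exI[of _ "a*c"] exI[of _ "b*d"]) auto
qed

lemma pzero_mult:
  assumes "prime p" "pint p x" "pzero p y" shows "pzero p (x * y)"
proof -
  obtain a b where ab: "b \<noteq> 0" "\<not> p dvd b" "x = of_int a / of_int b"
    using assms(2) unfolding pint_def by blast
  obtain c d where cd: "d \<noteq> 0" "\<not> p dvd d" "p dvd c" "y = of_int c / of_int d"
    using assms(3) unfolding pzero_def by blast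
  have "x * y = of_int (a*c) / of_int (b*d)" using ab cd by (simp add: field_simps)
  moreover have "\<not> p dvd b*d" using ab cd assms(1) prime_dvd_mult_iff by blast
  moreover have "p dvd a*c" using cd by simp
  ultimately show ?thesis unfolding pzero_def using ab cd
    by (intro exI[of _ "a*c"] exI[of _ "b*d"]) auto
qed

lemma pzero_pint: "pzero p x \<Longrightarrow> pint p x"
  unfolding pzero_def pint_def by blast

lemma pint_of_int: "prime p \<Longrightarrow> pint p (of_int a)"
  unfolding pint_def by (rule exI[of _ a], rule exI[of _ 1]) (auto dest: not_prime_unit)

lemma pint_inv: "\<not> p dvd b \<Longrightarrow> pint p (1 / of_int b)"
  unfolding pint_def by (rule exI[of _ 1], rule exI[of _ b]) auto

lemma pint_frac: "\<not> p dvd b \<Longrightarrow> pint p (of_int a / of_int b)"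
  unfolding pint_def by (rule exI[of _ a], rule exI[of _ b]) auto

lemma pzero_neg: "pzero p x \<Longrightarrow> pzero p (- x)"
proof -
  assume "pzero p x"
  then obtain a b where ab: "b \<noteq> 0" "\<not> p dvd b" "p dvd a" "x = of_int a / of_int b"
    unfolding pzero_def by blast
  show ?thesis unfolding pzero_def using ab
    by (intro exI[of _ "- a"] exI[of _ "b"]) auto
qed

lemma pzero_diff: "prime p \<Longrightarrow> pzero p x \<Longrightarrow> pzero p y \<Longrightarrow> pzero p (x - y)"
  using pzero_add[of p x "-y"] pzero_neg by simp

lemma pzero_sum: "prime p \<Longrightarrow> (\<And>x. x \<in> A \<Longrightarrow> pzero p (f x)) \<Longrightarrow> pzero p (sum f A)"
  by (induction A rule: infinite_finite_induct) (auto simp: pzero_0 pzero_add)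

lemma pint_sum: "prime p \<Longrightarrow> (\<And>x. x \<in> A \<Longrightarrow> pint p (f x)) \<Longrightarrow> pint p (sum f A)"
  by (induction A rule: infinite_finite_induct) (auto simp: pint_add pint_of_int[of p 0, simplified])

lemma key_int:
  assumes "prime p" "[a = b] (mod p)" "\<not> p dvd a" "\<not> p dvd b"
  shows "pzero p (1 / of_int a - 1 / of_int b)"
proof -
  have a0: "a \<noteq> 0" "b \<noteq> 0" using assms(3,4) by auto
  have "1 / of_int a - 1 / of_int b = (of_int (b - a) / of_int (a*b) :: rat)"
    using a0 by (simp add: field_simps)
  moreover have "\<not> p dvd a*b" using assms prime_dvd_mult_iff by blast
  moreover have "p dvd b - a" using assms(2) cong_iff_dvd_diff cong_sym by blast
  ultimately show ?thesis unfolding pzero_def using a0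
    by (intro exI[of _ "b - a"] exI[of _ "a*b"]) auto
qed

lemma key_nat:
  assumes "prime p" "[a = b] (mod p)" "\<not> p dvd a" "\<not> p dvd b"
  shows "pzero (int p) (1 / of_nat a - 1 / of_nat b)"
  using key_int[of "int p" "int a" "int b"] assms
  by (simp add: cong_int_iff)



lemma mult_mod_bij:
  fixes p c :: nat
  assumes "prime p" "\<not> p dvd c"
  shows "(\<lambda>i. c*i mod p) ` {1..p-1} = {1..p-1}" "inj_on (\<lambda>i. c*i mod p) {1..p-1}"
proof -
  have p1: "p > 1" using assms(1) prime_gt_1_nat by blast
  show inj: "inj_on (\<lambda>i. c*i mod p) {1..p-1}"
  proof (rule inj_onI)
    fix i j assume ij: "i \<in> {1..p-1}" "j \<in> {1..p-1}" "c*i mod p = c*j mod p"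
    have "[c*i = c*j] (mod p)" using ij(3) by (simp add: cong_def)
    moreover have "coprime c p" using assms prime_imp_coprime coprime_commute by blast
    ultimately have "[i = j] (mod p)" using cong_mult_lcancel_nat by blast
    moreover have "i < p" "j < p" using ij(1,2) p1 by auto
    ultimately show "i = j" by (simp add: cong_def)
  qed
  have "(\<lambda>i. c*i mod p) ` {1..p-1} \<subseteq> {1..p-1}"
  proof
    fix x assume "x \<in> (\<lambda>i. c*i mod p) ` {1..p-1}"
    then obtain i where i: "i \<in> {1..p-1}" "x = c*i mod p" by blast
    have "\<not> p dvd i" using i(1) p1 by (auto dest: dvd_imp_le)
    then have "\<not> p dvd c*i" using assms prime_dvd_mult_iff by blast
    then have "x \<noteq> 0" using i by (simp add: dvd_eq_mod_eq_0)
    moreover have "x < p" using i p1 by simp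
    ultimately show "x \<in> {1..p-1}" by simp
  qed
  then show "(\<lambda>i. c*i mod p) ` {1..p-1} = {1..p-1}" using inj by (simp add: endo_inj_surj)
qed

lemma powsum:
  fixes p c m :: nat
  assumes "prime p" "\<not> p dvd c" "\<not> int p dvd (int c ^ m - 1)"
  shows "pzero (int p) (\<Sum>i\<in>{1..p-1}. 1 / of_nat i ^ m :: rat)"
proof -
  define U where "U = {1..p-1}"
  define S where "S = (\<Sum>i\<in>U. 1 / of_nat i ^ m :: rat)"
  have pr: "prime (int p)" using assms(1) by simp
  have p1: "p > 1" using assms(1) prime_gt_1_nat by blast
  have ndi: "\<not> p dvd i" if "i \<in> U" for i using that p1 unfolding U_def by (auto dest: dvd_imp_le)
  have "S = (\<Sum>i\<in>(\<lambda>i. c*i mod p) ` U. 1 / of_nat i ^ m)"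
    unfolding S_def U_def using mult_mod_bij[OF assms(1,2)] by simp
  also have "\<dots> = (\<Sum>i\<in>U. 1 / of_nat (c*i mod p) ^ m)"
    using sum.reindex[OF mult_mod_bij(2)[OF assms(1,2)], of "\<lambda>i. 1 / of_nat i ^ m :: rat"]
    unfolding U_def by simp
  finally have S1: "S = (\<Sum>i\<in>U. 1 / of_nat (c*i mod p) ^ m)" .
  have "pzero (int p) (\<Sum>i\<in>U. 1 / of_nat ((c*i mod p) ^ m) - 1 / of_nat ((c*i) ^ m) :: rat)"
  proof (rule pzero_sum[OF pr])
    fix i assume i: "i \<in> U"
    have nd: "\<not> p dvd c*i" using ndi[OF i] assms prime_dvd_mult_iff by blast
    have nd1: "\<not> p dvd (c*i)^m" using nd assms(1) prime_dvd_power by blast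
    have nd2: "\<not> p dvd (c*i mod p)^m" using nd assms(1) prime_dvd_power
      by (metis dvd_mod_iff dvd_refl)
    have "[(c*i mod p)^m = (c*i)^m] (mod p)" by (simp add: cong_def power_mod)
    then show "pzero (int p) (1 / of_nat ((c*i mod p) ^ m) - 1 / of_nat ((c*i) ^ m) :: rat)"
      using key_nat[OF assms(1) _ nd2 nd1] by simp
  qed
  also have "(\<Sum>i\<in>U. 1 / of_nat ((c*i mod p) ^ m) - 1 / of_nat ((c*i) ^ m) :: rat)
      = (\<Sum>i\<in>U. 1 / of_nat (c*i mod p) ^ m) - (1 / of_nat c ^ m) * (\<Sum>i\<in>U. 1 / of_nat i ^ m)"
    by (simp add: sum_subtractf sum_distrib_left power_mult_distrib)
  also have "\<dots> = S - (1 / of_nat c ^ m) * S" using S1 S_def by simp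
  finally have z: "pzero (int p) (S - (1 / of_nat c ^ m) * S)" .
  have cm: "int c ^ m - 1 \<noteq> 0" using assms(3) by auto
  have c0: "c \<noteq> 0" using assms(2) by (metis dvd_0_right)
  have cm': "(of_nat c ^ m :: rat) \<noteq> 1"
  proof
    assume "(of_nat c ^ m :: rat) = 1"
    then have "of_int (int c ^ m) = (of_int 1 :: rat)" by simp
    then have "int c ^ m = 1" using of_int_eq_iff by blast
    then show False using cm by simp
  qed
  have "S = (of_int (int c ^ m) / of_int (int c ^ m - 1)) * (S - (1 / of_nat c ^ m) * S)"
    using cm' c0 by (simp add: field_simps)
  moreover have "pint (int p) (of_int (int c ^ m) / of_int (int c ^ m - 1))"
    using pint_frac assms(3) by blast
  ultimately have "pzero (int p) S" using pzero_mult[OF pr _ z] by metis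
  then show ?thesis unfolding S_def U_def .
qed



definition perm6 :: "nat \<Rightarrow> nat \<times> nat \<times> nat \<Rightarrow> nat \<times> nat \<times> nat" where
  "perm6 n t = (case t of (a,b,c) \<Rightarrow>
     (if n = 0 then (a,b,c) else if n = 1 then (a,c,b) else if n = 2 then (b,a,c)
      else if n = 3 then (b,c,a) else if n = 4 then (c,a,b) else (c,b,a)))"

lemma perm6_image:
  fixes U :: "nat set"
  defines "T \<equiv> {(i, j, k). i \<in> U \<and> j \<in> U \<and> k \<in> U \<and> i < j \<and> j < k}"
  defines "D \<equiv> {(i, j, k). i \<in> U \<and> j \<in> U \<and> k \<in> U \<and> i \<noteq> j \<and> i \<noteq> k \<and> j \<noteq> k}"
  shows "(\<lambda>(n,t). perm6 n t) ` ({0..<6} \<times> T) = D"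
proof
  show "(\<lambda>(n,t). perm6 n t) ` ({0..<6} \<times> T) \<subseteq> D"
    unfolding T_def D_def perm6_def by (auto split: if_splits)
  show "D \<subseteq> (\<lambda>(n,t). perm6 n t) ` ({0..<6} \<times> T)"
  proof
    fix x assume "x \<in> D"
    then obtain i j k where x: "x = (i,j,k)" "i \<in> U" "j \<in> U" "k \<in> U" "i \<noteq> j" "i \<noteq> k" "j \<noteq> k"
      unfolding D_def by auto
    consider "i < j \<and> j < k" | "i < k \<and> k < j" | "j < i \<and> i < k" | "k < i \<and> i < j"
      | "j < k \<and> k < i" | "k < j \<and> j < i" using x by linarith
    then show "x \<in> (\<lambda>(n,t). perm6 n t) ` ({0..<6} \<times> T)"
    proof cases
      case 1 then show ?thesis using x
        by (intro rev_image_eqI[of "(0,(i,j,k))"]) (auto simp: T_def perm6_def)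
    next
      case 2 then show ?thesis using x
        by (intro rev_image_eqI[of "(1,(i,k,j))"]) (auto simp: T_def perm6_def)
    next
      case 3 then show ?thesis using x
        by (intro rev_image_eqI[of "(2,(j,i,k))"]) (auto simp: T_def perm6_def)
    next
      case 4 then show ?thesis using x
        by (intro rev_image_eqI[of "(3,(k,i,j))"]) (auto simp: T_def perm6_def)
    next
      case 5 then show ?thesis using x
        by (intro rev_image_eqI[of "(4,(j,k,i))"]) (auto simp: T_def perm6_def)
    next
      case 6 then show ?thesis using x
        by (intro rev_image_eqI[of "(5,(k,j,i))"]) (auto simp: T_def perm6_def)
    qed
  qed
qed

lemma perm6_inj:
  fixes U :: "nat set"
  defines "T \<equiv> {(i, j, k). i \<in> U \<and> j \<in> U \<and> k \<in> U \<and> i < j \<and> j < k}"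
  shows "inj_on (\<lambda>(n,t). perm6 n t) ({0..<6} \<times> T)"
  unfolding T_def inj_on_def perm6_def by (auto split: if_splits)



lemma sum_D_perm:
  fixes U :: "nat set" and g :: "nat \<times> nat \<times> nat \<Rightarrow> 'a::comm_monoid_add"
  defines "T \<equiv> {(i, j, k). i \<in> U \<and> j \<in> U \<and> k \<in> U \<and> i < j \<and> j < k}"
  defines "D \<equiv> {(i, j, k). i \<in> U \<and> j \<in> U \<and> k \<in> U \<and> i \<noteq> j \<and> i \<noteq> k \<and> j \<noteq> k}"
  shows "sum g D = (\<Sum>n<6. \<Sum>t\<in>T. g (perm6 n t))"
proof -
  have "sum g D = sum g ((\<lambda>(n,t). perm6 n t) ` ({0..<6} \<times> T))"
    using perm6_image[of U] unfolding T_def D_def by simp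
  also have "\<dots> = (\<Sum>x\<in>{0..<6} \<times> T. g (case x of (n,t) \<Rightarrow> perm6 n t))"
    using sum.reindex[OF perm6_inj[of U], of g] unfolding T_def by (simp add: comp_def)
  also have "\<dots> = (\<Sum>n\<in>{0..<6}. \<Sum>t\<in>T. g (perm6 n t))"
    by (simp add: sum.cartesian_product split_def)
  finally show ?thesis by (simp add: lessThan_atLeast0)
qed

lemma s1: fixes f :: "nat \<Rightarrow> nat \<Rightarrow> nat \<Rightarrow> 'a::comm_ring_1"
  assumes "finite U"
  shows "(\<Sum>i\<in>U. \<Sum>j\<in>U. \<Sum>k\<in>U. if i = j then f i j k else 0) = (\<Sum>i\<in>U. \<Sum>k\<in>U. f i i k)"
proof -
  have "(\<Sum>i\<in>U. \<Sum>j\<in>U. \<Sum>k\<in>U. if i = j then f i j k else 0) = (\<Sum>i\<in>U. \<Sum>j\<in>U. if i = j then (\<Sum>k\<in>U. f i j k) else 0)"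
    by (intro sum.cong refl) auto
  also have "\<dots> = (\<Sum>i\<in>U. \<Sum>k\<in>U. f i i k)" using assms by simp
  finally show ?thesis .
qed
lemma s2: fixes f :: "nat \<Rightarrow> nat \<Rightarrow> nat \<Rightarrow> 'a::comm_ring_1"
  assumes "finite U"
  shows "(\<Sum>i\<in>U. \<Sum>j\<in>U. \<Sum>k\<in>U. if i = k then f i j k else 0) = (\<Sum>i\<in>U. \<Sum>j\<in>U. f i j i)"
  using assms by simp
lemma s3: fixes f :: "nat \<Rightarrow> nat \<Rightarrow> nat \<Rightarrow> 'a::comm_ring_1"
  assumes "finite U"
  shows "(\<Sum>i\<in>U. \<Sum>j\<in>U. \<Sum>k\<in>U. if j = k then f i j k else 0) = (\<Sum>i\<in>U. \<Sum>j\<in>U. f i j j)"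
  using assms by simp
lemma s4: fixes f :: "nat \<Rightarrow> nat \<Rightarrow> nat \<Rightarrow> 'a::comm_ring_1"
  assumes "finite U"
  shows "(\<Sum>i\<in>U. \<Sum>j\<in>U. \<Sum>k\<in>U. if i = j \<and> j = k then f i j k else 0) = (\<Sum>i\<in>U. f i i i)"
proof -
  have "(\<Sum>i\<in>U. \<Sum>j\<in>U. \<Sum>k\<in>U. if i = j \<and> j = k then f i j k else 0) = (\<Sum>i\<in>U. \<Sum>j\<in>U. if i = j then (\<Sum>k\<in>U. if j = k then f i j k else 0) else 0)"
    by (intro sum.cong refl) auto
  also have "\<dots> = (\<Sum>i\<in>U. f i i i)" using assms by simp
  finally show ?thesis .
qed

lemma ie: fixes x :: "'a::comm_ring_1"
  assumes "a \<and> b \<longrightarrow> c" "a \<and> c \<longrightarrow> b" "b \<and> c \<longrightarrow> a"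
  shows "(if \<not> a \<and> \<not> b \<and> \<not> c then x else 0) = x - (if a then x else 0) - (if b then x else 0) - (if c then x else 0) + 2*(if a \<and> c then x else 0)"
  using assms by (cases a; cases b; cases c) (simp_all add: algebra_simps)

lemma test: fixes f :: "nat \<Rightarrow> nat \<Rightarrow> nat \<Rightarrow> 'a::comm_ring_1" assumes "finite U" shows
 "(\<Sum>i\<in>U. \<Sum>j\<in>U. \<Sum>k\<in>U. f i j k)
      - (\<Sum>i\<in>U. \<Sum>j\<in>U. \<Sum>k\<in>U. if i = j then f i j k else 0)
      - (\<Sum>i\<in>U. \<Sum>j\<in>U. \<Sum>k\<in>U. if i = k then f i j k else 0)
      - (\<Sum>i\<in>U. \<Sum>j\<in>U. \<Sum>k\<in>U. if j = k then f i j k else 0)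
      + 2 * (\<Sum>i\<in>U. \<Sum>j\<in>U. \<Sum>k\<in>U. (if i = j \<and> j = k then f i j k else 0)) = (\<Sum>i\<in>U. \<Sum>j\<in>U. \<Sum>k\<in>U. f i j k)
     - (\<Sum>i\<in>U. \<Sum>k\<in>U. f i i k) - (\<Sum>i\<in>U. \<Sum>j\<in>U. f i j i) - (\<Sum>i\<in>U. \<Sum>j\<in>U. f i j j)
     + 2 * (\<Sum>i\<in>U. f i i i)"
  unfolding s1[OF assms(1)] s2[OF assms(1)] s3[OF assms(1)] s4[OF assms(1)] ..

lemma sum_D_incl_excl:
  fixes U :: "nat set" and f :: "nat \<Rightarrow> nat \<Rightarrow> nat \<Rightarrow> 'a::comm_ring_1"
  assumes "finite U"
  defines "D \<equiv> {(i, j, k). i \<in> U \<and> j \<in> U \<and> k \<in> U \<and> i \<noteq> j \<and> i \<noteq> k \<and> j \<noteq> k}"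
  shows "(\<Sum>(i,j,k)\<in>D. f i j k) = (\<Sum>i\<in>U. \<Sum>j\<in>U. \<Sum>k\<in>U. f i j k)
     - (\<Sum>i\<in>U. \<Sum>k\<in>U. f i i k) - (\<Sum>i\<in>U. \<Sum>j\<in>U. f i j i) - (\<Sum>i\<in>U. \<Sum>j\<in>U. f i j j)
     + 2 * (\<Sum>i\<in>U. f i i i)"
proof -
  define P where "P = (\<lambda>(i::nat,j::nat,k::nat). i \<noteq> j \<and> i \<noteq> k \<and> j \<noteq> k)"
  have D: "D = {t \<in> U \<times> U \<times> U. P t}"
    unfolding D_def P_def by auto
  have "(\<Sum>(i,j,k)\<in>D. f i j k) = (\<Sum>t\<in>U \<times> U \<times> U. if P t then (\<lambda>(i,j,k). f i j k) t else 0)"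
    unfolding D using assms(1) by (simp add: sum.inter_filter)
  also have "\<dots> = (\<Sum>(i,j,k)\<in>U \<times> U \<times> U.
      f i j k - (if i = j then f i j k else 0) - (if i = k then f i j k else 0) - (if j = k then f i j k else 0)
      + 2 * (if i = j \<and> j = k then f i j k else 0))"
  proof (rule sum.cong[OF refl])
    fix t :: "nat \<times> nat \<times> nat"
    obtain i j k where t: "t = (i,j,k)" by (cases t) blast
    show "(if P t then (\<lambda>(i,j,k). f i j k) t else 0) = (\<lambda>(i,j,k).
      f i j k - (if i = j then f i j k else 0) - (if i = k then f i j k else 0) - (if j = k then f i j k else 0)
      + 2 * (if i = j \<and> j = k then f i j k else 0)) t"
      unfolding t P_def prod.case by (rule ie) blast+
  qed
  also have "\<dots> = (\<Sum>i\<in>U. \<Sum>j\<in>U. \<Sum>k\<in>U.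
      f i j k - (if i = j then f i j k else 0) - (if i = k then f i j k else 0) - (if j = k then f i j k else 0)
      + 2 * (if i = j \<and> j = k then f i j k else 0))"
    by (simp add: sum.cartesian_product split_def)
  also have "\<dots> = (\<Sum>i\<in>U. \<Sum>j\<in>U. \<Sum>k\<in>U. f i j k)
     - (\<Sum>i\<in>U. \<Sum>k\<in>U. f i i k) - (\<Sum>i\<in>U. \<Sum>j\<in>U. f i j i) - (\<Sum>i\<in>U. \<Sum>j\<in>U. f i j j)
     + 2 * (\<Sum>i\<in>U. f i i i)"
  proof -
    have "(\<Sum>i\<in>U. \<Sum>j\<in>U. \<Sum>k\<in>U.
      f i j k - (if i = j then f i j k else 0) - (if i = k then f i j k else 0) - (if j = k then f i j k else 0)
      + 2 * (if i = j \<and> j = k then f i j k else 0)) = 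
      (\<Sum>i\<in>U. \<Sum>j\<in>U. \<Sum>k\<in>U. f i j k)
      - (\<Sum>i\<in>U. \<Sum>j\<in>U. \<Sum>k\<in>U. if i = j then f i j k else 0)
      - (\<Sum>i\<in>U. \<Sum>j\<in>U. \<Sum>k\<in>U. if i = k then f i j k else 0)
      - (\<Sum>i\<in>U. \<Sum>j\<in>U. \<Sum>k\<in>U. if j = k then f i j k else 0)
      + 2 * (\<Sum>i\<in>U. \<Sum>j\<in>U. \<Sum>k\<in>U. (if i = j \<and> j = k then f i j k else 0))"
      by (simp only: sum.distrib sum_subtractf sum_distrib_left)
    then show ?thesis using test[OF assms(1), of f] by (rule trans)
  qed
  finally show ?thesis .
qed



lemma ndiv_range: "prime p \<Longrightarrow> 1 \<le> x \<Longrightarrow> x \<le> p - 1 \<Longrightarrow> \<not> p dvd (x::nat)"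
  using prime_gt_1_nat[of p] by (auto dest: dvd_imp_le)

lemma refl_term:
  fixes p i j k :: nat
  assumes "prime p" "1 \<le> i" "i < j" "j < k" "k \<le> p - 1"
  shows "pzero (int p) (1 / (of_nat (p-k) ^ 2 * of_nat (p-j) * of_nat (p-i)) - 1 / (of_nat i * of_nat j * of_nat k ^ 2) :: rat)"
proof -
  have p1: "p > 1" using assms(1) prime_gt_1_nat by blast
  have r: "1 \<le> i" "i \<le> p - 1" "1 \<le> j" "j \<le> p - 1" "1 \<le> k" "k \<le> p - 1"
          "1 \<le> p-i" "p-i \<le> p - 1" "1 \<le> p-j" "p-j \<le> p - 1" "1 \<le> p-k" "p-k \<le> p - 1"
    using assms p1 by auto
  note nd = ndiv_range[OF assms(1)]
  have h: "[int p - int x = - int x] (mod int p)" for x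
    by (simp add: cong_iff_dvd_diff)
  have "[(int p - int k)^2 * (int p - int j) * (int p - int i) = (- int k)^2 * (- int j) * (- int i)] (mod int p)"
    by (intro cong_mult cong_pow h)
  moreover have "(- int k)^2 * (- int j) * (- int i) = int i * int j * int k ^ 2"
    by (simp add: algebra_simps power2_eq_square)
  ultimately have c0: "[(int p - int k)^2 * (int p - int j) * (int p - int i) = int i * int j * int k ^ 2] (mod int p)"
    by (simp add: mult_ac)
  have e1: "int ((p-k)^2 * (p-j) * (p-i)) = (int p - int k)^2 * (int p - int j) * (int p - int i)"
    using assms p1 by (simp add: of_nat_diff)
  have e2: "int (i * j * k^2) = int i * int j * int k ^ 2" by simp
  have "[int ((p-k)^2 * (p-j) * (p-i)) = int (i * j * k^2)] (mod int p)"
    unfolding e1 e2 by (rule c0)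
  then have c: "[(p-k)^2 * (p-j) * (p-i) = i * j * k^2] (mod p)" using cong_int_iff by blast
  have n1: "\<not> p dvd (p-k)^2 * (p-j) * (p-i)"
    using nd[OF r(7,8)] nd[OF r(9,10)] nd[OF r(11,12)] assms(1)
    by (simp add: prime_dvd_mult_iff prime_dvd_power_iff)
  have n2: "\<not> p dvd i * j * k^2"
    using nd[OF r(1,2)] nd[OF r(3,4)] nd[OF r(5,6)] assms(1)
    by (simp add: prime_dvd_mult_iff prime_dvd_power_iff)
  show ?thesis using key_nat[OF assms(1) c n1 n2] by simp
qed

lemma pint_powsum: "prime p \<Longrightarrow> pint (int p) (\<Sum>i\<in>{1..p-1}. 1 / of_nat i ^ m :: rat)"
proof -
  assume pr: "prime p"
  show ?thesis
  proof (rule pint_sum)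
    show "prime (int p)" using pr by simp
    fix i assume i: "i \<in> {1..p-1}"
    have "\<not> p dvd i ^ m" using ndiv_range[OF pr] i pr
      by (metis atLeastAtMost_iff prime_dvd_power)
    then have "\<not> int p dvd int (i ^ m)" by (metis int_dvd_int_iff)
    then have "pint (int p) (1 / of_int (int (i ^ m)))" by (rule pint_inv)
    then show "pint (int p) (1 / of_nat i ^ m)" by simp
  qed
qed



theorem lemma2p7:
  fixes p :: nat
  assumes "prime p" and "p \<ge> 7"
  defines "T \<equiv> {(i::nat, j::nat, k::nat). 1 \<le> i \<and> i < j \<and> j < k \<and> k \<le> p - 1}"
  shows "rat_cong (\<Sum>(i, j, k)\<in>T. 1 / (of_nat i ^ 2 * of_nat j * of_nat k :: rat))
                  (\<Sum>(i, j, k)\<in>T. 1 / (of_nat i * of_nat j * of_nat k ^ 2 :: rat)) (int p)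
       \<and> rat_cong (\<Sum>(i, j, k)\<in>T. 1 / (of_nat i * of_nat j * of_nat k ^ 2 :: rat))
                  (- (1/2) * (\<Sum>(i, j, k)\<in>T. 1 / (of_nat i * of_nat j ^ 2 * of_nat k :: rat))) (int p)"
proof -
  define U where "U = {1..p-1}"
  define A where "A = (\<Sum>(i, j, k)\<in>T. 1 / (of_nat i ^ 2 * of_nat j * of_nat k :: rat))"
  define B where "B = (\<Sum>(i, j, k)\<in>T. 1 / (of_nat i * of_nat j * of_nat k ^ 2 :: rat))"
  define C where "C = (\<Sum>(i, j, k)\<in>T. 1 / (of_nat i * of_nat j ^ 2 * of_nat k :: rat))"
  define S where "S = (\<lambda>m. (\<Sum>i\<in>U. 1 / of_nat i ^ m :: rat))"
  have pr: "prime (int p)" using assms(1) by simp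
  have fU: "finite U" unfolding U_def by simp
  have TU: "T = {(i, j, k). i \<in> U \<and> j \<in> U \<and> k \<in> U \<and> i < j \<and> j < k}"
    unfolding T_def U_def by (rule set_eqI) (clarsimp simp: split_def, linarith)
  have fT: "finite T"
  proof -
    have "T \<subseteq> U \<times> U \<times> U" unfolding TU by auto
    then show ?thesis using fU finite_subset by blast
  qed
  define \<sigma> where "\<sigma> = (\<lambda>(i::nat, j::nat, k::nat). (p - k, p - j, p - i))"
  have \<sigma>inj: "inj_on \<sigma> T"
    unfolding inj_on_def \<sigma>_def T_def by (clarsimp, linarith)
  have \<sigma>sub: "\<sigma> ` T \<subseteq> T"
    unfolding \<sigma>_def T_def by (clarsimp, linarith)
  have \<sigma>img: "\<sigma> ` T = T" using endo_inj_surj[OF fT \<sigma>sub \<sigma>inj] .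
  have "A = (\<Sum>t\<in>\<sigma> ` T. (\<lambda>(i, j, k). 1 / (of_nat i ^ 2 * of_nat j * of_nat k :: rat)) t)"
    unfolding A_def \<sigma>img ..
  also have "\<dots> = (\<Sum>t\<in>T. (\<lambda>(i, j, k). 1 / (of_nat i ^ 2 * of_nat j * of_nat k :: rat)) (\<sigma> t))"
    using sum.reindex[OF \<sigma>inj] by (simp add: comp_def)
  finally have A\<sigma>: "A = (\<Sum>(i,j,k)\<in>T. 1 / (of_nat (p-k) ^ 2 * of_nat (p-j) * of_nat (p-i) :: rat))"
    unfolding \<sigma>_def by (simp add: split_def)
  have AB: "pzero (int p) (A - B)"
  proof -
    have "A - B = (\<Sum>(i,j,k)\<in>T. 1 / (of_nat (p-k) ^ 2 * of_nat (p-j) * of_nat (p-i)) - 1 / (of_nat i * of_nat j * of_nat k ^ 2) :: rat)"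
      unfolding A\<sigma> B_def by (simp add: split_def sum_subtractf)
    also have "pzero (int p) \<dots>"
      by (rule pzero_sum[OF pr]) (auto simp: T_def intro!: refl_term[OF assms(1)])
    finally show ?thesis .
  qed
  define D where "D = {(i, j, k). i \<in> U \<and> j \<in> U \<and> k \<in> U \<and> i \<noteq> j \<and> i \<noteq> k \<and> j \<noteq> k}"
  define g where "g = (\<lambda>(i::nat, j::nat, k::nat). 1 / (of_nat i ^ 2 * of_nat j * of_nat k :: rat))"
  have E1: "sum g D = 2 * (A + B + C)"
  proof -
    have "sum g D = (\<Sum>n<6. \<Sum>t\<in>T. g (perm6 n t))"
      unfolding D_def TU by (rule sum_D_perm)
    also have "\<dots> = (\<Sum>t\<in>T. g (perm6 0 t)) + (\<Sum>t\<in>T. g (perm6 1 t)) + (\<Sum>t\<in>T. g (perm6 2 t))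
       + (\<Sum>t\<in>T. g (perm6 3 t)) + (\<Sum>t\<in>T. g (perm6 4 t)) + (\<Sum>t\<in>T. g (perm6 5 t))"
      by (simp add: eval_nat_numeral)
    also have "(\<Sum>t\<in>T. g (perm6 0 t)) = A" unfolding A_def
      by (intro sum.cong refl) (auto simp: g_def perm6_def)
    also have "(\<Sum>t\<in>T. g (perm6 1 t)) = A" unfolding A_def
      by (intro sum.cong refl) (auto simp: g_def perm6_def mult_ac)
    also have "(\<Sum>t\<in>T. g (perm6 2 t)) = C" unfolding C_def
      by (intro sum.cong refl) (auto simp: g_def perm6_def mult_ac)
    also have "(\<Sum>t\<in>T. g (perm6 3 t)) = C" unfolding C_def
      by (intro sum.cong refl) (auto simp: g_def perm6_def mult_ac)
    also have "(\<Sum>t\<in>T. g (perm6 4 t)) = B" unfolding B_def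
      by (intro sum.cong refl) (auto simp: g_def perm6_def mult_ac)
    also have "(\<Sum>t\<in>T. g (perm6 5 t)) = B" unfolding B_def
      by (intro sum.cong refl) (auto simp: g_def perm6_def mult_ac)
    finally show ?thesis by simp
  qed
  have E2: "sum g D = S 2 * S 1 * S 1 - S 3 * S 1 - S 3 * S 1 - S 2 * S 2 + 2 * S 4"
  proof -
    have "sum g D = (\<Sum>(i,j,k)\<in>D. 1 / (of_nat i ^ 2 * of_nat j * of_nat k :: rat))"
      unfolding g_def ..
    also have "\<dots> = (\<Sum>i\<in>U. \<Sum>j\<in>U. \<Sum>k\<in>U. 1 / (of_nat i ^ 2 * of_nat j * of_nat k :: rat))
     - (\<Sum>i\<in>U. \<Sum>k\<in>U. 1 / (of_nat i ^ 2 * of_nat i * of_nat k :: rat))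
     - (\<Sum>i\<in>U. \<Sum>j\<in>U. 1 / (of_nat i ^ 2 * of_nat j * of_nat i :: rat))
     - (\<Sum>i\<in>U. \<Sum>j\<in>U. 1 / (of_nat i ^ 2 * of_nat j * of_nat j :: rat))
     + 2 * (\<Sum>i\<in>U. 1 / (of_nat i ^ 2 * of_nat i * of_nat i :: rat))"
      unfolding D_def by (rule sum_D_incl_excl[OF fU])
    also have "(\<Sum>i\<in>U. \<Sum>j\<in>U. \<Sum>k\<in>U. 1 / (of_nat i ^ 2 * of_nat j * of_nat k :: rat)) = S 2 * S 1 * S 1"
    proof -
      have "(\<Sum>i\<in>U. \<Sum>j\<in>U. \<Sum>k\<in>U. 1 / (of_nat i ^ 2 * of_nat j * of_nat k :: rat))
         = (\<Sum>i\<in>U. \<Sum>j\<in>U. \<Sum>k\<in>U. (1 / of_nat i ^ 2) * ((1 / of_nat j) * (1 / of_nat k)) :: rat)"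
        by (intro sum.cong refl) simp
      also have "\<dots> = (\<Sum>i\<in>U. (1 / of_nat i ^ 2) * (\<Sum>j\<in>U. \<Sum>k\<in>U. (1 / of_nat j) * (1 / of_nat k)) :: rat)"
        by (simp only: sum_distrib_left)
      also have "\<dots> = S 2 * (\<Sum>j\<in>U. \<Sum>k\<in>U. (1 / of_nat j) * (1 / of_nat k))"
        unfolding S_def by (simp only: sum_distrib_right)
      also have "(\<Sum>j\<in>U. \<Sum>k\<in>U. (1 / of_nat j) * (1 / of_nat k) :: rat) = S 1 * S 1"
        unfolding S_def by (simp add: sum_product)
      finally show ?thesis by (simp add: mult.assoc)
    qed
    also have "(\<Sum>i\<in>U. \<Sum>k\<in>U. 1 / (of_nat i ^ 2 * of_nat i * of_nat k :: rat)) = S 3 * S 1"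
      unfolding S_def sum_product by (intro sum.cong refl) (simp add: eval_nat_numeral mult_ac)
    also have "(\<Sum>i\<in>U. \<Sum>j\<in>U. 1 / (of_nat i ^ 2 * of_nat j * of_nat i :: rat)) = S 3 * S 1"
      unfolding S_def sum_product by (intro sum.cong refl) (simp add: eval_nat_numeral mult_ac)
    also have "(\<Sum>i\<in>U. \<Sum>j\<in>U. 1 / (of_nat i ^ 2 * of_nat j * of_nat j :: rat)) = S 2 * S 2"
      unfolding S_def sum_product by (intro sum.cong refl) (simp add: eval_nat_numeral mult_ac)
    also have "(\<Sum>i\<in>U. 1 / (of_nat i ^ 2 * of_nat i * of_nat i :: rat)) = S 4"
      unfolding S_def by (simp add: eval_nat_numeral mult_ac)
    finally show ?thesis .
  qed
  have p7: "p \<ge> 7" by fact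
  have S1: "pzero (int p) (S 1)"
  proof -
    have "\<not> p dvd (p - 1)" using ndiv_range[OF assms(1), of "p-1"] p7 by simp
    moreover have "\<not> int p dvd (int (p-1) ^ 1 - 1)"
    proof
      assume "int p dvd (int (p-1) ^ 1 - 1)"
      moreover have "int (p-1) ^ 1 - 1 = int p - 2" using p7 by simp
      ultimately have "int p dvd int p - 2" by simp
      then have "int p dvd int p - (int p - 2)" by (rule dvd_diff[OF dvd_refl])
      then have "int p dvd 2" by simp
      then show False using p7 by (auto dest: zdvd_imp_le)
    qed
    ultimately show ?thesis using powsum[OF assms(1), of "p-1" 1] unfolding S_def U_def by simp
  qed
  have nd2: "\<not> p dvd 2" using p7 by (auto dest: dvd_imp_le)
  have S2: "pzero (int p) (S 2)"
  proof -
    have "\<not> int p dvd (int 2 ^ 2 - 1)" using p7 by (auto dest: zdvd_imp_le)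
    then show ?thesis using powsum[OF assms(1) nd2, of 2] unfolding S_def U_def by simp
  qed
  have S4: "pzero (int p) (S 4)"
  proof -
    have "\<not> int p dvd (int 2 ^ 4 - 1)"
    proof
      assume "int p dvd (int 2 ^ 4 - 1)"
      then have "int p dvd 3 * 5" by simp
      then have "int p dvd 3 \<or> int p dvd 5" using pr prime_dvd_mult_iff by blast
      then show False using p7 by (auto dest: zdvd_imp_le)
    qed
    then show ?thesis using powsum[OF assms(1) nd2, of 4] unfolding S_def U_def by simp
  qed
  have Si: "pint (int p) (S m)" for m unfolding S_def U_def using pint_powsum[OF assms(1)] .
  have two: "pint (int p) 2" using pint_of_int[OF pr, of 2] by simp
  have Ez: "pzero (int p) (sum g D)"
    unfolding E2
    using pzero_mult[OF pr pint_mult[OF pr Si Si] S1] pzero_mult[OF pr Si S1]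
          pzero_mult[OF pr Si S2] pzero_mult[OF pr two S4]
    by (intro pzero_add[OF pr] pzero_diff[OF pr]) simp_all
  have q4: "pint (int p) (1/4)"
  proof -
    have "\<not> int p dvd 4" using p7 by (auto dest: zdvd_imp_le)
    then show ?thesis using pint_inv[of "int p" 4] by simp
  qed
  have q2: "pint (int p) (1/2)"
  proof -
    have "\<not> int p dvd 2" using p7 by (auto dest: zdvd_imp_le)
    then show ?thesis using pint_inv[of "int p" 2] by simp
  qed
  have "B - (- (1/2) * C) = (1/4) * sum g D - (1/2) * (A - B)"
    unfolding E1 by (simp add: field_simps)
  moreover have "pzero (int p) ((1/4) * sum g D - (1/2) * (A - B))"
    by (intro pzero_diff[OF pr] pzero_mult[OF pr q4 Ez] pzero_mult[OF pr q2 AB])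
  ultimately have BC: "pzero (int p) (B - (- (1/2) * C))" by simp
  show ?thesis
    using AB BC unfolding rat_cong_pzero A_def B_def C_def by simp
qed


end
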